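(* Let $n,k\ge1$ and let $x_1,\dots,x_j$ be distinct nodes of $\Gamma_{2^n}$ such that the subgraph of $\Gamma_{2^n}$ induced on $\{x_1,\dots,x_j\}$ is exactly the directed cycle $x_1\to x_2\to\cdots\to x_j\to x_1$. Then the subgraph of $\Gamma_{2^{n+k-1}}$ induced on $\overline{H}_{M_k}^{-1}(\{x_1,\dots,x_j\})$ is a disjoint union of directed cycles.
   Context: $T(x)=x/2$ for $x$ even, $T(x)=(3x+1)/2$ for $x$ odd, extended to $\mathbb{Z}_2$; $T_0(x)=x/2$, $T_1(x)=(3x+1)/2$. $\Gamma_d$ is the directed graph on $\mathbb{Z}/d\mathbb{Z}$ with a black arrow $r\to s$ iff there exist positive integers $x\equiv r$, $y\equiv s\pmod d$ with $x$ even and $T_0(x)=y$, and a red arrow $r\to s$ iff there exist such $x,y$ with $x$ odd and $T_1(x)=y$. The parity vector map $\Phi^{-1}:\mathbb{Z}_2\to\mathbb{Z}_2$ is $\Phi^{-1}(x)=\sum_{i\ge0}(T^i(x)\bmod 2)2^i$; it is a bijection with inverse $\Phi$. For $k\ge1$, $M_k(\sum_i a_i2^i)=\sum_i m_i2^i$ with $m_i\equiv a_i+\cdots+a_{i+k-1}\pmod2$, and $H_{M_k}=\Phi\circ M_k\circ\Phi^{-1}$, which commutes with $T$. The residue of $H_{M_k}(x)$ mod $2^n$ depends only on $x$ mod $2^{n+k-1}$; $\overline{H}_{M_k}:\mathbb{Z}/2^{n+k-1}\mathbb{Z}\to\mathbb{Z}/2^n\mathbb{Z}$ is the induced map. *)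

theory Defs
  imports Main "HOL-Library.Disjoint_Sets"
begin

text \<open>Collatz map T on natural numbers (representatives of 2-adic residues).\<close>
definition T :: "nat \<Rightarrow> nat" where
  "T x = (if even x then x div 2 else (3 * x + 1) div 2)"

text \<open>Arrows of Gamma_d on Z/dZ, residues represented by 0..d-1.\<close>
definition gamma_black :: "nat \<Rightarrow> nat \<Rightarrow> nat \<Rightarrow> bool" where
  "gamma_black d r s \<longleftrightarrow> (\<exists>x y :: nat. 0 < x \<and> 0 < y \<and> x mod d = r \<and> y mod d = s
      \<and> even x \<and> y = x div 2)"

definition gamma_red :: "nat \<Rightarrow> nat \<Rightarrow> nat \<Rightarrow> bool" where
  "gamma_red d r s \<longleftrightarrow> (\<exists>x y :: nat. 0 < x \<and> 0 < y \<and> x mod d = r \<and> y mod d = s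
      \<and> odd x \<and> y = (3 * x + 1) div 2)"

definition gamma_edge :: "nat \<Rightarrow> nat \<Rightarrow> nat \<Rightarrow> bool" where
  "gamma_edge d r s \<longleftrightarrow> gamma_black d r s \<or> gamma_red d r s"

text \<open>Phi^{-1}(x) mod 2^N: the first N parity bits of the trajectory of x.\<close>
definition parvec :: "nat \<Rightarrow> nat \<Rightarrow> nat" where
  "parvec N x = (\<Sum>i<N. ((T ^^ i) x mod 2) * 2 ^ i)"

text \<open>M_k(a) mod 2^n: m_i = a_i + ... + a_(i+k-1) mod 2.\<close>
definition Mk :: "nat \<Rightarrow> nat \<Rightarrow> nat \<Rightarrow> nat" where
  "Mk k n a = (\<Sum>i<n. ((\<Sum>j<k. a div 2 ^ (i + j) mod 2) mod 2) * 2 ^ i)"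

text \<open>Induced map Hbar_{M_k} : Z/2^(n+k-1) -> Z/2^n, i.e. Phi o M_k o Phi^{-1} taken mod 2^n.\<close>
definition Hbar :: "nat \<Rightarrow> nat \<Rightarrow> nat \<Rightarrow> nat" where
  "Hbar n k x = (THE y. y < 2 ^ n \<and> parvec n y = Mk k n (parvec (n + k - 1) x))"

definition is_dcycle :: "('a \<Rightarrow> 'a \<Rightarrow> bool) \<Rightarrow> 'a set \<Rightarrow> bool" where
  "is_dcycle E S \<longleftrightarrow> (\<exists>cs. cs \<noteq> [] \<and> distinct cs \<and> set cs = S \<and>
     (\<forall>a\<in>S. \<forall>b\<in>S. E a b \<longleftrightarrow>
        (\<exists>i<length cs. a = cs ! i \<and> b = cs ! ((i + 1) mod length cs))))"

definition disjoint_union_of_cycles :: "('a \<Rightarrow> 'a \<Rightarrow> bool) \<Rightarrow> 'a set \<Rightarrow> bool" where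
  "disjoint_union_of_cycles E S \<longleftrightarrow> (\<exists>P. partition_on S P \<and> (\<forall>B\<in>P. is_dcycle E B) \<and>
     (\<forall>B\<in>P. \<forall>C\<in>P. B \<noteq> C \<longrightarrow> (\<forall>a\<in>B. \<forall>b\<in>C. \<not> E a b)))"

end

theory Submission
  imports Defs
begin

lemma funpow_in: "f ` S \<subseteq> S \<Longrightarrow> a \<in> S \<Longrightarrow> (f^^i) a \<in> S"
  by (induction i) auto

lemma funpow_cancel: "f ` S \<subseteq> S \<Longrightarrow> inj_on f S \<Longrightarrow> u \<in> S \<Longrightarrow> v \<in> S
   \<Longrightarrow> (f^^i) u = (f^^i) v \<Longrightarrow> u = v"
proof (induction i)
  case 0 then show ?case by simp
next
  case (Suc i)
  have "(f^^i) u \<in> S" "(f^^i) v \<in> S" using Suc.prems funpow_in by metis+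
  then have "(f^^i) u = (f^^i) v" using Suc.prems(2,5) by (simp add: inj_on_def)
  then show ?case using Suc by blast
qed

lemma cycles_lemma:
  assumes fin: "finite S"
    and ex: "\<forall>x\<in>S. \<exists>y\<in>S. E x y"
    and us: "\<forall>x\<in>S. \<forall>y1\<in>S. \<forall>y2\<in>S. E x y1 \<longrightarrow> E x y2 \<longrightarrow> y1 = y2"
    and up: "\<forall>x1\<in>S. \<forall>x2\<in>S. \<forall>y\<in>S. E x1 y \<longrightarrow> E x2 y \<longrightarrow> x1 = x2"
  shows "disjoint_union_of_cycles E S"
proof -
  define f where "f x = (SOME y. y \<in> S \<and> E x y)" for x
  have fS: "f x \<in> S \<and> E x (f x)" if "x \<in> S" for x
    using someI_ex[of "\<lambda>y. y \<in> S \<and> E x y"] ex that unfolding f_def by blast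
  have fu: "y = f x" if "x \<in> S" "y \<in> S" "E x y" for x y
    using us fS that by blast
  have inj: "inj_on f S"
    unfolding inj_on_def using up fS by metis
  have fin_in: "f ` S \<subseteq> S" using fS by blast
  have per: "\<exists>p>0. (f^^p) a = a" if a: "a \<in> S" for a
  proof -
    have "range (\<lambda>i. (f^^i) a) \<subseteq> S" using funpow_in[OF fin_in a] by blast
    then have "finite (range (\<lambda>i. (f^^i) a))" using fin finite_subset by blast
    then have "\<not> inj (\<lambda>i. (f^^i) a)" using finite_imageD by blast
    then obtain i j where ij: "i < j" "(f^^i) a = (f^^j) a"
      unfolding inj_on_def by (metis UNIV_I linorder_neqE_nat)
    have "(f^^j) a = (f^^i) ((f^^(j-i)) a)"
      using ij(1) by (metis funpow_add le_add_diff_inverse less_imp_le o_apply)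
    then have "(f^^(j-i)) a = a"
      using funpow_cancel[OF fin_in inj, of "(f^^(j-i)) a" a i] ij funpow_in[OF fin_in a] a by metis
    then show ?thesis using ij by (intro exI[of _ "j-i"]) auto
  qed
  define P where "P a = (LEAST p. 0 < p \<and> (f^^p) a = a)" for a
  have P1: "0 < P a" "(f^^(P a)) a = a" if "a \<in> S" for a
    using LeastI_ex[OF per[OF that]] unfolding P_def by auto
  have P2: "\<not> (0 < q \<and> (f^^q) a = a)" if "q < P a" for a q
    using not_less_Least[of q "\<lambda>p. 0 < p \<and> (f^^p) a = a"] that unfolding P_def by blast
  have mult: "(f^^(m * P a)) a = a" if "a \<in> S" for a m
  proof (induction m)
    case 0 then show ?case by simp
  next
    case (Suc m)
    have "(f^^(Suc m * P a)) a = (f^^(P a)) ((f^^(m * P a)) a)"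
      by (simp add: funpow_add)
    then show ?case using Suc P1[OF that] by simp
  qed
  have red: "(f^^i) a = (f^^(i mod P a)) a" if "a \<in> S" for a i
  proof -
    have e: "i = i mod P a + (i div P a) * P a" by simp
    have "(f^^i) a = (f^^(i mod P a + (i div P a) * P a)) a"
      using arg_cong[OF e, of "\<lambda>m. (f^^m) a"] .
    also have "\<dots> = (f^^(i mod P a)) ((f^^((i div P a) * P a)) a)" by (simp only: funpow_add o_apply)
    finally show ?thesis using mult[OF that] by simp
  qed
  define R where "R = {(a,b). a \<in> S \<and> b \<in> S \<and> (\<exists>i. (f^^i) a = b)}"
  have eq: "equiv S R"
  proof (rule equivI)
    show "refl_on S R" unfolding refl_on_def R_def by (auto intro: exI[of _ 0])
    show "sym R"
    proof (rule symI)
      fix a b assume "(a, b) \<in> R"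
      then obtain i where a: "a \<in> S" and b: "b \<in> S" and bi: "(f^^i) a = b" unfolding R_def by auto
      have ge: "i \<le> i * P a" using P1(1)[OF a] mult_le_mono2[of 1 "P a" i] by simp
      have "(f^^(i * P a - i)) ((f^^i) a) = (f^^(i * P a - i + i)) a" by (simp add: funpow_add)
      also have "\<dots> = a" using ge mult[OF a, of i] by (simp add: mult.commute)
      finally show "(b, a) \<in> R"
        using a b bi unfolding R_def by auto
    qed
    show "trans R" unfolding trans_def R_def
      by (auto, metis funpow_add o_apply)
    show "R \<subseteq> S \<times> S" unfolding R_def by auto
  qed
  define cs where "cs a = map (\<lambda>i. (f^^i) a) [0..<P a]" for a
  have cls: "R``{a} = set (cs a)" if a: "a \<in> S" for a
  proof
    show "R``{a} \<subseteq> set (cs a)"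
    proof
      fix b assume "b \<in> R``{a}"
      then obtain i where "b = (f^^i) a" unfolding R_def by auto
      then have "b = (f^^(i mod P a)) a" using red[OF a] by simp
      then show "b \<in> set (cs a)" unfolding cs_def using P1(1)[OF a] by auto
    qed
    show "set (cs a) \<subseteq> R``{a}" unfolding cs_def R_def using a funpow_in[OF fin_in a] by auto
  qed
  have dist: "distinct (cs a)" if a: "a \<in> S" for a
    unfolding cs_def distinct_conv_nth
  proof (clarsimp)
    fix i j assume ij: "i < P a" "j < P a" "i \<noteq> j" "(f^^i) a = (f^^j) a"
    have gen: "False" if "i < j" "j < P a" "(f^^i) a = (f^^j) a" for i j
    proof -
      have "(f^^j) a = (f^^i) ((f^^(j-i)) a)"
        using that(1) by (metis funpow_add le_add_diff_inverse less_imp_le o_apply)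
      then have "(f^^(j-i)) a = a"
        using funpow_cancel[OF fin_in inj, of "(f^^(j-i)) a" a i] that funpow_in[OF fin_in a] a by metis
      moreover have "j - i < P a" "0 < j - i" using that by linarith+
      ultimately show False using P2[of "j-i" a] by blast
    qed
    show False using ij gen[of i j] gen[of j i] by (metis linorder_neqE_nat)
  qed
  have edge: "E u v \<longleftrightarrow> v = f u" if "u \<in> S" "v \<in> S" for u v
    using fu fS that by blast
  show ?thesis unfolding disjoint_union_of_cycles_def
  proof (intro exI[of _ "S // R"] conjI)
    show "partition_on S (S // R)" using partition_on_quotient[OF eq] .
    show "\<forall>B\<in>S // R. is_dcycle E B"
    proof
    fix B assume B: "B \<in> S // R"
    then obtain a where a: "a \<in> S" and Ba: "B = R``{a}" by (rule quotientE)
    have BS: "B \<subseteq> S" using Ba unfolding R_def by auto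
    have len: "length (cs a) = P a" unfolding cs_def by simp
    have nth: "cs a ! i = (f^^i) a" if "i < P a" for i unfolding cs_def using that by simp
    show "is_dcycle E B" unfolding is_dcycle_def
    proof (intro exI[of _ "cs a"] conjI ballI)
      show "cs a \<noteq> []" using len P1(1)[OF a] by auto
      show "distinct (cs a)" using dist[OF a] .
      show "set (cs a) = B" using cls[OF a] Ba by simp
    next
      fix u v assume u: "u \<in> B" and v: "v \<in> B"
      have uS: "u \<in> S" and vS: "v \<in> S" using u v BS by auto
      obtain i where i: "i < P a" "u = (f^^i) a"
        using u cls[OF a] Ba unfolding cs_def by auto
      have fu': "f u = (f^^((i+1) mod P a)) a"
        using red[OF a, of "i+1"] i by simp
      show "E u v \<longleftrightarrow> (\<exists>i<length (cs a). u = cs a ! i \<and> v = cs a ! ((i + 1) mod length (cs a)))"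
      proof
        assume "E u v"
        then have "v = f u" using edge uS vS by blast
        then show "\<exists>i<length (cs a). u = cs a ! i \<and> v = cs a ! ((i + 1) mod length (cs a))"
          using i fu' len nth P1(1)[OF a] by (intro exI[of _ i]) auto
      next
        assume "\<exists>i<length (cs a). u = cs a ! i \<and> v = cs a ! ((i + 1) mod length (cs a))"
        then obtain j where j: "j < P a" "u = (f^^j) a" "v = (f^^((j+1) mod P a)) a"
          using len nth P1(1)[OF a] by auto
        have "v = f u" using j red[OF a, of "j+1"] by simp
        then show "E u v" using edge uS vS by blast
      qed
    qed
    qed
    show "\<forall>B\<in>S // R. \<forall>C\<in>S // R. B \<noteq> C \<longrightarrow> (\<forall>a\<in>B. \<forall>b\<in>C. \<not> E a b)"
    proof (intro ballI impI notI)
      fix B C u v assume B: "B \<in> S // R" and C: "C \<in> S // R" and ne: "B \<noteq> C" and u: "u \<in> B" and v: "v \<in> C" and e: "E u v"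
      obtain a where a: "a \<in> S" and Ba: "B = R``{a}" using B by (rule quotientE)
      have CS: "C \<subseteq> S" using C unfolding R_def quotient_def by auto
      have uS: "u \<in> S" using u Ba unfolding R_def by auto
      have vS: "v \<in> S" using v CS by auto
      have "v = f u" using edge uS vS e by blast
      obtain i where "u = (f^^i) a" using u Ba unfolding R_def by auto
      then have "v = (f^^(Suc i)) a" using \<open>v = f u\<close> by simp
      then have "v \<in> B" using Ba a vS unfolding R_def by blast
      then show False using quotient_disj[OF eq B C] ne v by blast
    qed
  qed
qed


definition pv :: "nat \<Rightarrow> nat \<Rightarrow> nat" where "pv x i = (T^^i) x mod 2"
definition bs :: "nat \<Rightarrow> (nat \<Rightarrow> nat) \<Rightarrow> nat" where "bs N b = (\<Sum>i<N. b i * 2^i)"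

lemma pv_T: "pv (T x) i = pv x (Suc i)"
  unfolding pv_def by (simp only: funpow_Suc_right o_apply)

lemma pv_lt: "pv x i < 2" unfolding pv_def by simp

lemma pv0: "pv x 0 = x mod 2" unfolding pv_def by simp

lemma bs_Suc: "bs (Suc N) b = b 0 + 2 * bs N (\<lambda>i. b (Suc i))"
  unfolding bs_def sum.lessThan_Suc_shift by (simp add: sum_distrib_left ac_simps)

lemma bs_lt: "(\<forall>i<N. b i < 2) \<Longrightarrow> bs N b < 2^N"
proof (induction N arbitrary: b)
  case 0 then show ?case by (simp add: bs_def)
next
  case (Suc N)
  have "bs N (\<lambda>i. b (Suc i)) < 2^N" using Suc by auto
  moreover have "b 0 < 2" using Suc by auto
  ultimately show ?case by (simp add: bs_Suc)
qed

lemma bs_bit: "(\<forall>i<N. b i < 2) \<Longrightarrow> i < N \<Longrightarrow> bs N b div 2^i mod 2 = b i"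
proof (induction N arbitrary: b i)
  case 0 then show ?case by simp
next
  case (Suc N)
  show ?case
  proof (cases i)
    case 0 then show ?thesis using Suc.prems by (simp add: bs_Suc)
  next
    case (Suc i')
    have "bs (Suc N) b div 2^i = (b 0 + 2 * bs N (\<lambda>i. b (Suc i))) div 2 div 2^i'"
      using Suc by (simp add: bs_Suc div_mult2_eq power_Suc)
    also have "(b 0 + 2 * bs N (\<lambda>i. b (Suc i))) div 2 = bs N (\<lambda>i. b (Suc i))"
      using Suc.prems by auto
    finally show ?thesis using Suc.IH[of "\<lambda>i. b (Suc i)" i'] Suc.prems Suc by auto
  qed
qed

lemma parvec_bs: "parvec N x = bs N (pv x)"
  unfolding parvec_def bs_def pv_def by simp

lemma T_even: "even x \<Longrightarrow> T x = x div 2" unfolding T_def by simp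
lemma T_odd: "odd x \<Longrightarrow> T x = (3 * x + 1) div 2" unfolding T_def by simp

lemma cancel3: "(3 * a) mod m = (3 * b) mod (m::nat) \<Longrightarrow> coprime m 3 \<Longrightarrow> a mod m = b mod m"
proof -
  assume h: "(3 * a) mod m = (3 * b) mod m" and c: "coprime m 3"
  show ?thesis
  proof (cases "b \<le> a")
    case True
    then have "m dvd 3 * a - 3 * b" using h mod_eq_dvd_iff_nat[of "3*b" "3*a" m] by simp
    then have "m dvd 3 * (a - b)" by (simp add: diff_mult_distrib2)
    then have "m dvd a - b" using c coprime_dvd_mult_right_iff by blast
    then show ?thesis using True mod_eq_dvd_iff_nat[of b a m] by simp
  next
    case False
    then have "m dvd 3 * b - 3 * a" using h mod_eq_dvd_iff_nat[of "3*a" "3*b" m] by simp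
    then have "m dvd 3 * (b - a)" by (simp add: diff_mult_distrib2)
    then have "m dvd b - a" using c coprime_dvd_mult_right_iff by blast
    then show ?thesis using False mod_eq_dvd_iff_nat[of a b m] by simp
  qed
qed

lemma addcancel: "((u::nat) + c) mod m = (v + c) mod m \<longleftrightarrow> u mod m = v mod m"
proof (cases "u \<le> v")
  case True
  then show ?thesis using mod_eq_dvd_iff_nat[of u v m] mod_eq_dvd_iff_nat[of "u+c" "v+c" m]
    by (simp add: eq_commute)
next
  case False
  then show ?thesis using mod_eq_dvd_iff_nat[of v u m] mod_eq_dvd_iff_nat[of "v+c" "u+c" m]
    by simp
qed

lemma T_step: "x mod 2 = y mod 2 \<Longrightarrow>
   (T x mod 2^N = T y mod 2^N \<longleftrightarrow> x mod 2^(Suc N) = y mod 2^(Suc N))"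
proof -
  assume p: "x mod 2 = y mod 2"
  define a where "a = x div 2"
  define b where "b = y div 2"
  have ab: "x = 2 * a + x mod 2" "y = 2 * b + y mod 2" unfolding a_def b_def by simp_all
  have mx: "x mod 2^(Suc N) = 2 * (a mod 2^N) + x mod 2"
    using mod_mult2_eq[of x 2 "2^N"] unfolding a_def by (simp add: power_Suc)
  have my: "y mod 2^(Suc N) = 2 * (b mod 2^N) + y mod 2"
    using mod_mult2_eq[of y 2 "2^N"] unfolding b_def by (simp add: power_Suc)
  have eq: "x mod 2^(Suc N) = y mod 2^(Suc N) \<longleftrightarrow> a mod 2^N = b mod 2^N"
    using mx my p by auto
  show ?thesis
  proof (cases "even x")
    case True
    then have "even y" using p by (simp add: even_iff_mod_2_eq_zero)
    then have "T x = a" "T y = b" using True by (simp_all add: T_even a_def b_def)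
    then show ?thesis using eq by simp
  next
    case False
    then have o: "odd y" using p by (simp add: odd_iff_mod_2_eq_one)
    have "x mod 2 = 1" "y mod 2 = 1" using False o by (simp_all add: odd_iff_mod_2_eq_one)
    have x1: "x = 2 * a + 1" using odd_two_times_div_two_succ[of x] False unfolding a_def by simp
    have y1: "y = 2 * b + 1" using odd_two_times_div_two_succ[of y] o unfolding b_def by simp
    have Tx: "T x = 3 * a + 2" using False by (simp add: T_odd x1)
    have Ty: "T y = 3 * b + 2" using o by (simp add: T_odd y1)
    have c: "coprime (2^N) (3::nat)" by simp
    have "T x mod 2^N = T y mod 2^N \<longleftrightarrow> (3 * a + 2) mod 2^N = (3 * b + 2) mod 2^N"
      by (simp only: Tx Ty)
    also have "\<dots> \<longleftrightarrow> (3 * a) mod 2^N = (3 * b) mod 2^N"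
      by (rule addcancel)
    also have "\<dots> \<longleftrightarrow> a mod 2^N = b mod 2^N"
    proof
      assume "(3 * a) mod 2^N = (3 * b) mod 2^N"
      then show "a mod 2^N = b mod 2^N" using cancel3[OF _ c] by blast
    next
      assume h: "a mod 2^N = b mod 2^N"
      have "(3 * a) mod 2^N = (3 * (a mod 2^N)) mod 2^N" by (simp add: mod_mult_right_eq)
      also have "\<dots> = (3 * (b mod 2^N)) mod 2^N" using h by simp
      also have "\<dots> = (3 * b) mod 2^N" by (simp add: mod_mult_right_eq)
      finally show "(3 * a) mod 2^N = (3 * b) mod 2^N" .
    qed
    finally show ?thesis using eq by simp
  qed
qed

lemma F1: "(\<forall>i<N. pv x i = pv y i) \<longleftrightarrow> x mod 2^N = y mod 2^N"
proof (induction N arbitrary: x y)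
  case 0 then show ?case by simp
next
  case (Suc N)
  have "(\<forall>i<Suc N. pv x i = pv y i) \<longleftrightarrow> pv x 0 = pv y 0 \<and> (\<forall>i<N. pv x (Suc i) = pv y (Suc i))"
    by (auto simp: less_Suc_eq_0_disj)
  also have "\<dots> \<longleftrightarrow> x mod 2 = y mod 2 \<and> T x mod 2^N = T y mod 2^N"
    using Suc.IH[of "T x" "T y"] by (simp add: pv0 pv_T)
  also have "\<dots> \<longleftrightarrow> x mod 2^Suc N = y mod 2^Suc N"
  proof
    assume h: "x mod 2 = y mod 2 \<and> T x mod 2^N = T y mod 2^N"
    then show "x mod 2^Suc N = y mod 2^Suc N" using T_step by blast
  next
    assume h: "x mod 2^Suc N = y mod 2^Suc N"
    then have "x mod 2^Suc N mod 2 = y mod 2^Suc N mod 2" by simp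
    then have "x mod 2 = y mod 2" by (simp add: mod_mod_cancel)
    then show "x mod 2 = y mod 2 \<and> T x mod 2^N = T y mod 2^N" using T_step h by blast
  qed
  finally show ?case .
qed

lemma eq_bits: "y < 2^N \<Longrightarrow> z < 2^N \<Longrightarrow> (\<And>i. i < N \<Longrightarrow> pv y i = pv z i) \<Longrightarrow> y = z"
  using F1[of N y z] by simp

lemma surj_bits:
  assumes "\<forall>i<N. b i < 2"
  shows "\<exists>x<2^N. \<forall>i<N. pv x i = b i"
proof -
  have inj: "inj_on (parvec N) {..<2^N}"
  proof (rule inj_onI)
    fix x y assume x: "x \<in> {..<(2::nat)^N}" and y: "y \<in> {..<(2::nat)^N}" and e: "parvec N x = parvec N y"
    have "\<forall>i<N. pv x i = pv y i"
    proof (intro allI impI)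
      fix i assume i: "i < N"
      have "pv x i = bs N (pv x) div 2^i mod 2" using bs_bit[of N "pv x" i] pv_lt i by simp
      also have "\<dots> = bs N (pv y) div 2^i mod 2" using e by (simp add: parvec_bs)
      also have "\<dots> = pv y i" using bs_bit[of N "pv y" i] pv_lt i by simp
      finally show "pv x i = pv y i" .
    qed
    then show "x = y" using F1[of N x y] x y by simp
  qed
  have sub: "parvec N ` {..<2^N} \<subseteq> {..<2^N}" using bs_lt pv_lt by (auto simp: parvec_bs)
  have "parvec N ` {..<2^N} = {..<2^N}" using endo_inj_surj[OF _ sub inj] by simp
  moreover have "bs N b \<in> {..<2^N}" using bs_lt[OF assms] by simp
  ultimately have "bs N b \<in> parvec N ` {..<2^N}" by simp
  then obtain x where x: "x < 2^N" "parvec N x = bs N b" by auto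
  have "\<forall>i<N. pv x i = b i"
  proof (intro allI impI)
    fix i assume i: "i < N"
    have "pv x i = bs N (pv x) div 2^i mod 2" using bs_bit[of N "pv x" i] pv_lt i by simp
    also have "\<dots> = bs N b div 2^i mod 2" using x by (simp add: parvec_bs)
    also have "\<dots> = b i" using bs_bit[OF assms i] .
    finally show "pv x i = b i" .
  qed
  then show ?thesis using x by blast
qed

lemma Hbar_bits:
  assumes k: "1 \<le> k"
  shows "Hbar n k x < 2^n \<and> (\<forall>i<n. pv (Hbar n k x) i = (\<Sum>j<k. pv x (i+j)) mod 2)"
proof -
  define c where "c i = (\<Sum>j<k. pv x (i+j)) mod 2" for i
  have c2: "\<forall>i<n. c i < 2" unfolding c_def by simp
  have Mk: "Mk k n (parvec (n + k - 1) x) = bs n c"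
    unfolding Mk_def bs_def c_def
  proof (rule sum.cong[OF refl])
    fix i assume i: "i \<in> {..<n}"
    have "(\<Sum>j<k. parvec (n + k - 1) x div 2 ^ (i + j) mod 2) = (\<Sum>j<k. pv x (i+j))"
    proof (rule sum.cong[OF refl])
      fix j assume j: "j \<in> {..<k}"
      then have "i + j < n + k - 1" using i k by auto
      then show "parvec (n + k - 1) x div 2 ^ (i + j) mod 2 = pv x (i+j)"
        using bs_bit[of "n+k-1" "pv x" "i+j"] pv_lt by (simp add: parvec_bs)
    qed
    then show "(\<Sum>j<k. parvec (n + k - 1) x div 2 ^ (i + j) mod 2) mod 2 * 2 ^ i =
        (\<Sum>j<k. pv x (i + j)) mod 2 * 2 ^ i" by simp
  qed
  obtain y where y: "y < 2^n" "\<forall>i<n. pv y i = c i" using surj_bits[OF c2] by blast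
  have py: "parvec n y = bs n c" unfolding parvec_bs bs_def using y(2) by simp
  have uniq: "z = y" if "z < 2^n" "parvec n z = bs n c" for z
  proof (rule eq_bits[OF that(1) y(1)])
    fix i assume i: "i < n"
    have "pv z i = bs n (pv z) div 2^i mod 2" using bs_bit[of n "pv z" i] pv_lt i by simp
    also have "\<dots> = bs n c div 2^i mod 2" using that by (simp add: parvec_bs)
    also have "\<dots> = c i" using bs_bit[OF c2 i] .
    finally show "pv z i = pv y i" using y(2) i by simp
  qed
  have "Hbar n k x = y"
    unfolding Hbar_def Mk
  proof (rule the_equality)
    show "y < 2 ^ n \<and> parvec n y = bs n c" using y(1) py by simp
    show "z = y" if "z < 2 ^ n \<and> parvec n z = bs n c" for z using uniq that by blast
  qed
  then show ?thesis using y c_def by simp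
qed

lemma mod2M: "z mod (2 * M) = M * (z div M mod 2) + z mod (M::nat)"
  using mod_mult2_eq[of z M 2] by (simp add: mult.commute)

lemma edge_mod:
  assumes M: "0 < M"
  shows "gamma_edge (2*M) r s \<longleftrightarrow> r < 2*M \<and> s < 2*M \<and> T r mod M = s mod M"
proof
  assume "gamma_edge (2*M) r s"
  then show "r < 2*M \<and> s < 2*M \<and> T r mod M = s mod M"
    unfolding gamma_edge_def
  proof
    assume "gamma_black (2*M) r s"
    then obtain x y where h: "x mod (2*M) = r" "y mod (2*M) = s" "even x" "y = x div 2"
      unfolding gamma_black_def by blast
    have lt: "r < 2*M" "s < 2*M" using h M by auto
    obtain a where a: "x = 2 * a" using h(3) by blast
    have r: "r = 2 * (a mod M)" using h(1) a by (simp add: mod_mult_mult1)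
    have Tr: "T r = a mod M" using r by (simp add: T_even)
    have "a mod (2*M) mod M = a mod M" by (rule mod_mod_cancel) simp
    then have "s mod M = a mod M" using h(2,4) a by simp
    then have "T r mod M = s mod M" using Tr by simp
    then show ?thesis using lt by simp
  next
    assume "gamma_red (2*M) r s"
    then obtain x y where h: "x mod (2*M) = r" "y mod (2*M) = s" "odd x" "y = (3 * x + 1) div 2"
      unfolding gamma_red_def by blast
    have lt: "r < 2*M" "s < 2*M" using h M by auto
    have ro: "odd r" using h(1,3) by (metis dvd_mod_iff dvd_triv_left)
    obtain q where q: "x = r + 2 * M * q" using h(1) by (metis div_mult_mod_eq add.commute mult.commute)
    have "3 * x + 1 = (3 * r + 1) + 2 * (3 * M * q)" using q by simp
    then have y: "y = (3 * r + 1) div 2 + 3 * M * q" using h(4) by simp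
    have "y mod (2*M) mod M = y mod M" by (rule mod_mod_cancel) simp
    then have "s mod M = y mod M" using h(2) by simp
    also have "\<dots> = (3 * r + 1) div 2 mod M" using y by (simp add: mult.commute[of 3 M] mult.assoc)
    finally show ?thesis using lt ro by (simp add: T_odd)
  qed
next
  assume h: "r < 2*M \<and> s < 2*M \<and> T r mod M = s mod M"
  show "gamma_edge (2*M) r s" unfolding gamma_edge_def
  proof (cases "even r")
    case True
    have rd: "r div 2 < M" using h by auto
    have "2 * (s + 2 * M) mod (2 * M) = 2 * ((s + 2*M) mod M)" by (rule mod_mult_mult1)
    also have "\<dots> = 2 * (s mod M)" by simp
    also have "\<dots> = 2 * (r div 2)" using h True rd by (simp add: T_even)
    also have "\<dots> = r" using True by simp
    finally have "2 * (s + 2 * M) mod (2 * M) = r" .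
    moreover have "(s + 2 * M) mod (2 * M) = s" using h by simp
    moreover have "even (2 * (s + 2 * M))" by simp
    moreover have "0 < 2 * (s + 2 * M)" "0 < s + 2 * M" using M by simp_all
    moreover have "s + 2 * M = 2 * (s + 2 * M) div 2" by simp
    ultimately have "gamma_black (2*M) r s" unfolding gamma_black_def by blast
    then show "gamma_black (2*M) r s \<or> gamma_red (2*M) r s" ..
  next
    case False
    define A where "A = (3 * r + 1) div 2"
    have As: "A mod M = s mod M" using h False by (simp add: T_odd A_def)
    have ys: "\<exists>c. (A + 3 * M * c) mod (2 * M) = s"
    proof (cases "A mod (2*M) = s")
      case True then show ?thesis by (intro exI[of _ 0]) simp
    next
      case F: False
      have sd: "s div M < 2" using h M by (simp add: less_mult_imp_div_less mult.commute)
      have s_eq: "s = M * (s div M) + s mod M" by simp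
      have "A div M mod 2 \<noteq> s div M"
      proof
        assume e: "A div M mod 2 = s div M"
        have "A mod (2*M) = M*(s div M) + s mod M" using mod2M[of A M] e As by simp
        then show False using F s_eq[symmetric] by simp
      qed
      moreover have "\<forall>u v::nat. u mod 2 \<noteq> v \<longrightarrow> v < 2 \<longrightarrow> (u+3) mod 2 = v" by presburger
      ultimately have d: "(A div M + 3) mod 2 = s div M" using sd by blast
      have "(A + 3 * M * 1) mod (2 * M) = M * ((A + 3 * M) div M mod 2) + (A + 3 * M) mod M"
        using mod2M[of "A + 3 * M" M] by simp
      also have "(A + 3 * M) div M = A div M + 3" using M by simp
      also have "(A + 3 * M) mod M = A mod M" by simp
      finally have "(A + 3 * M * 1) mod (2 * M) = s" using d As s_eq[symmetric] by simp
      then show ?thesis by blast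
    qed
    then obtain c where c: "(A + 3 * M * c) mod (2 * M) = s" by blast
    have x: "(r + 2 * M * c) mod (2 * M) = r" using h by simp
    have "3 * (r + 2 * M * c) + 1 = (3 * r + 1) + 2 * (3 * M * c)" by simp
    then have y: "(3 * (r + 2 * M * c) + 1) div 2 = A + 3 * M * c" unfolding A_def by simp
    have o: "odd (r + 2 * M * c)" using False by simp
    have p1: "0 < r + 2 * M * c" using False by (simp add: odd_pos)
    have "0 < A" unfolding A_def using False by (simp add: odd_pos)
    then have p2: "0 < A + 3 * M * c" by simp
    have "gamma_red (2*M) r s" unfolding gamma_red_def
      using o p1 p2 c x y[symmetric] by blast
    then show "gamma_black (2*M) r s \<or> gamma_red (2*M) r s" ..
  qed
qed

lemma edge_pv:
  assumes N: "1 \<le> N"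
  shows "gamma_edge (2^N) r s \<longleftrightarrow> r < 2^N \<and> s < 2^N \<and> (\<forall>i. Suc i < N \<longrightarrow> pv r (Suc i) = pv s i)"
proof -
  have p: "(2::nat)^N = 2 * 2^(N-1)" using N by (simp add: power_eq_if)
  have "gamma_edge (2^N) r s \<longleftrightarrow> r < 2^N \<and> s < 2^N \<and> T r mod 2^(N-1) = s mod 2^(N-1)"
    unfolding p by (rule edge_mod) simp
  also have "T r mod 2^(N-1) = s mod 2^(N-1) \<longleftrightarrow> (\<forall>i<N-1. pv (T r) i = pv s i)"
    by (rule F1[symmetric])
  also have "(\<forall>i<N-1. pv (T r) i = pv s i) \<longleftrightarrow> (\<forall>i. Suc i < N \<longrightarrow> pv r (Suc i) = pv s i)"
    unfolding pv_T using N by (metis less_diff_conv Suc_eq_plus1)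
  finally show ?thesis .
qed


lemma par1: "(a::nat) < 2 \<Longrightarrow> b < 2 \<Longrightarrow> (s + a) mod 2 = (s + b) mod 2 \<Longrightarrow> a = b" by presburger
lemma par1': "(a::nat) < 2 \<Longrightarrow> b < 2 \<Longrightarrow> (a + s) mod 2 = (b + s) mod 2 \<Longrightarrow> a = b" by presburger
lemma par2: "(p::nat) < 2 \<Longrightarrow> (s + (p + s) mod 2) mod 2 = p" by presburger

lemma modL: "(i::nat) < L \<Longrightarrow> (i + 1) mod L = (if i + 1 = L then 0 else i + 1)"
proof -
  assume i: "i < L"
  show ?thesis
  proof (cases "i + 1 = L")
    case True then show ?thesis by simp
  next
    case False then have "i + 1 < L" using i by simp
    then show ?thesis using False by simp
  qed
qed

theorem mainTheorem20:
  fixes n k :: nat and X :: "nat set"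
  assumes "1 \<le> n" and "1 \<le> k"
    and "X \<subseteq> {..<2 ^ n}"
    and "is_dcycle (gamma_edge (2 ^ n)) X"
  shows "disjoint_union_of_cycles (gamma_edge (2 ^ (n + k - 1)))
           {x. x < 2 ^ (n + k - 1) \<and> Hbar n k x \<in> X}"
proof -
  note n1 = assms(1) and k1 = assms(2)
  define N where "N = n + k - 1"
  obtain k' where k': "k = Suc k'" using k1 by (cases k) auto
  have N': "N = n + k'" unfolding N_def k' by simp
  have N1: "1 \<le> N" using n1 N' by simp
  define h where "h = Hbar n k"
  define En where "En = gamma_edge (2^n)"
  define E where "E = gamma_edge (2^N)"
  define S where "S = {x. x < 2^N \<and> h x \<in> X}"
  obtain cs where cs: "cs \<noteq> []" "distinct cs" "set cs = X"
    and csE: "\<forall>a\<in>X. \<forall>b\<in>X. En a b \<longleftrightarrow> (\<exists>i<length cs. a = cs ! i \<and> b = cs ! ((i + 1) mod length cs))"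
    using assms(4) unfolding is_dcycle_def En_def by blast
  define L where "L = length cs"
  have L0: "0 < L" using cs(1) unfolding L_def by simp
  have succX: "\<exists>b\<in>X. En a b" if a: "a \<in> X" for a
  proof -
    obtain i where i: "i < L" "a = cs ! i" using a cs(3) unfolding L_def by (metis in_set_conv_nth)
    have "(i + 1) mod L < L" using L0 by simp
    then have mem: "cs ! ((i + 1) mod L) \<in> X" using cs(3) unfolding L_def by auto
    have e: "En a (cs ! ((i + 1) mod L)) \<longleftrightarrow> (\<exists>j<L. a = cs ! j \<and> cs ! ((i + 1) mod L) = cs ! ((j + 1) mod L))"
      using csE[rule_format, OF a mem] unfolding L_def .
    have "En a (cs ! ((i + 1) mod L))" using i by (subst e) blast
    then show ?thesis using mem by blast
  qed
  have uniqS: "b1 = b2" if hh: "a \<in> X" "b1 \<in> X" "b2 \<in> X" "En a b1" "En a b2" for a b1 b2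
  proof -
    obtain i1 where i1: "i1 < L" "a = cs ! i1" "b1 = cs ! ((i1 + 1) mod L)"
      using csE[rule_format, OF hh(1) hh(2)] hh(4) unfolding L_def by blast
    obtain i2 where i2: "i2 < L" "a = cs ! i2" "b2 = cs ! ((i2 + 1) mod L)"
      using csE[rule_format, OF hh(1) hh(3)] hh(5) unfolding L_def by blast
    have "i1 = i2" using i1 i2 cs(2) nth_eq_iff_index_eq unfolding L_def by metis
    then show ?thesis using i1 i2 by simp
  qed
  have uniqP: "a1 = a2" if hh: "a1 \<in> X" "a2 \<in> X" "b \<in> X" "En a1 b" "En a2 b" for a1 a2 b
  proof -
    obtain i1 where i1: "i1 < L" "a1 = cs ! i1" "b = cs ! ((i1 + 1) mod L)"
      using csE[rule_format, OF hh(1) hh(3)] hh(4) unfolding L_def by blast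
    obtain i2 where i2: "i2 < L" "a2 = cs ! i2" "b = cs ! ((i2 + 1) mod L)"
      using csE[rule_format, OF hh(2) hh(3)] hh(5) unfolding L_def by blast
    have "(i1 + 1) mod L < L" "(i2 + 1) mod L < L" using L0 by simp_all
    then have "(i1 + 1) mod L = (i2 + 1) mod L" using i1 i2 cs(2) nth_eq_iff_index_eq unfolding L_def by metis
    then have "i1 = i2" using modL[OF i1(1)] modL[OF i2(1)] i1(1) i2(1) by (auto split: if_splits)
    then show ?thesis using i1 i2 by simp
  qed
  have hb: "h x < 2^n" "\<And>i. i < n \<Longrightarrow> pv (h x) i = (\<Sum>j<k. pv x (i+j)) mod 2" for x
    using Hbar_bits[OF k1, of n x] unfolding h_def by auto
  note edgeN = edge_pv[OF N1, folded E_def]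
  note edgen = edge_pv[OF n1, folded En_def]
  have A: "En (h x) (h y)" if "E x y" for x y
  proof -
    have xy: "\<forall>i. Suc i < N \<longrightarrow> pv x (Suc i) = pv y i" using that edgeN by blast
    have "pv (h x) (Suc i) = pv (h y) i" if i: "Suc i < n" for i
    proof -
      have "(\<Sum>j<k. pv x (Suc i + j)) = (\<Sum>j<k. pv y (i + j))"
      proof (rule sum.cong[OF refl])
        fix j assume "j \<in> {..<k}"
        then have "Suc (i + j) < N" using i N' k' by auto
        then show "pv x (Suc i + j) = pv y (i + j)" using xy by simp
      qed
      then show ?thesis using hb(2)[of "Suc i" x] hb(2)[of i y] i by simp
    qed
    then show ?thesis using edgen hb(1) by blast
  qed
  have ex: "\<forall>x\<in>S. \<exists>y\<in>S. E x y"
  proof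
    fix x assume xS: "x \<in> S"
    then have hx: "h x \<in> X" and xN: "x < 2^N" unfolding S_def by auto
    obtain m' where m': "m' \<in> X" "En (h x) m'" using succX[OF hx] by blast
    have m'b: "m' < 2^n" "\<forall>i. Suc i < n \<longrightarrow> pv (h x) (Suc i) = pv m' i" using m'(2) edgen by blast+
    define b where "b i = (if Suc i < N then pv x (Suc i) else (pv m' (n-1) + (\<Sum>j<k'. pv x (n+j))) mod 2)" for i
    have b2: "\<forall>i<N. b i < 2" unfolding b_def using pv_lt by simp
    obtain y where y: "y < 2^N" "\<forall>i<N. pv y i = b i" using surj_bits[OF b2] by blast
    have hy: "h y = m'"
    proof (rule eq_bits[OF hb(1) m'b(1)])
      fix i assume i: "i < n"
      show "pv (h y) i = pv m' i"
      proof (cases "Suc i < n")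
        case True
        have "(\<Sum>j<k. pv y (i + j)) = (\<Sum>j<k. pv x (Suc i + j))"
        proof (rule sum.cong[OF refl])
          fix j assume "j \<in> {..<k}"
          then have "Suc (i + j) < N" using True N' k' by auto
          then show "pv y (i + j) = pv x (Suc i + j)" using y(2) unfolding b_def by simp
        qed
        then show ?thesis using hb(2)[of i y] hb(2)[of "Suc i" x] True i m'b(2) by simp
      next
        case False
        then have ii: "i = n - 1" using i by simp
        have "(\<Sum>j<k'. pv y (n - 1 + j)) = (\<Sum>j<k'. pv x (n + j))"
        proof (rule sum.cong[OF refl])
          fix j assume "j \<in> {..<k'}"
          then have "Suc (n - 1 + j) < N" "n - 1 + j < N" using n1 N' by auto
          moreover have "Suc (n - 1 + j) = n + j" using n1 by simp
          ultimately show "pv y (n - 1 + j) = pv x (n + j)" using y(2) unfolding b_def by simp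
        qed
        moreover have "pv y (n - 1 + k') = (pv m' (n-1) + (\<Sum>j<k'. pv x (n+j))) mod 2"
        proof -
          have "n - 1 + k' < N" "\<not> Suc (n - 1 + k') < N" using n1 N' by auto
          then show ?thesis using y(2) unfolding b_def by simp
        qed
        ultimately have "pv (h y) (n-1) = ((\<Sum>j<k'. pv x (n + j)) + (pv m' (n-1) + (\<Sum>j<k'. pv x (n+j))) mod 2) mod 2"
          using hb(2)[of "n-1" y] n1 unfolding k' by simp
        also have "\<dots> = pv m' (n-1)" using par2 pv_lt by blast
        finally show ?thesis using ii by simp
      qed
    qed
    have "y \<in> S" unfolding S_def using y(1) hy m'(1) by simp
    moreover have "E x y" using edgeN xN y b_def by simp
    ultimately show "\<exists>y\<in>S. E x y" by blast
  qed
  have us: "\<forall>x\<in>S. \<forall>y1\<in>S. \<forall>y2\<in>S. E x y1 \<longrightarrow> E x y2 \<longrightarrow> y1 = y2"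
  proof (intro ballI impI)
    fix x y1 y2 assume xS: "x \<in> S" and y1S: "y1 \<in> S" and y2S: "y2 \<in> S" and e1: "E x y1" and e2: "E x y2"
    have hh: "h y1 = h y2" using uniqS[of "h x" "h y1" "h y2"] A[OF e1] A[OF e2] xS y1S y2S unfolding S_def by blast
    have x1: "\<forall>i. Suc i < N \<longrightarrow> pv x (Suc i) = pv y1 i" and x2: "\<forall>i. Suc i < N \<longrightarrow> pv x (Suc i) = pv y2 i"
      using e1 e2 edgeN by blast+
    have lo: "pv y1 i = pv y2 i" if "Suc i < N" for i using x1 x2 that by metis
    show "y1 = y2"
    proof (rule eq_bits[of y1 N y2])
      show "y1 < 2^N" "y2 < 2^N" using y1S y2S unfolding S_def by auto
      fix i assume i: "i < N"
      show "pv y1 i = pv y2 i"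
      proof (cases "Suc i < N")
        case True then show ?thesis using lo by blast
      next
        case False
        then have ii: "i = n - 1 + k'" using i N' n1 by simp
        have s: "(\<Sum>j<k'. pv y1 (n - 1 + j)) = (\<Sum>j<k'. pv y2 (n - 1 + j))"
          by (rule sum.cong[OF refl]) (use lo n1 N' in auto)
        have "pv (h y1) (n-1) = pv (h y2) (n-1)" using hh by simp
        then have "((\<Sum>j<k'. pv y1 (n - 1 + j)) + pv y1 (n - 1 + k')) mod 2 =
                   ((\<Sum>j<k'. pv y2 (n - 1 + j)) + pv y2 (n - 1 + k')) mod 2"
          using hb(2)[of "n-1" y1] hb(2)[of "n-1" y2] n1 unfolding k' by simp
        then have "pv y1 (n - 1 + k') = pv y2 (n - 1 + k')" using s par1 pv_lt by metis
        then show ?thesis using ii by simp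
      qed
    qed
  qed
  have up: "\<forall>x1\<in>S. \<forall>x2\<in>S. \<forall>y\<in>S. E x1 y \<longrightarrow> E x2 y \<longrightarrow> x1 = x2"
  proof (intro ballI impI)
    fix x1 x2 y assume x1S: "x1 \<in> S" and x2S: "x2 \<in> S" and yS: "y \<in> S" and e1: "E x1 y" and e2: "E x2 y"
    have hh: "h x1 = h x2" using uniqP[of "h x1" "h x2" "h y"] A[OF e1] A[OF e2] x1S x2S yS unfolding S_def by blast
    have x1: "\<forall>i. Suc i < N \<longrightarrow> pv x1 (Suc i) = pv y i" and x2: "\<forall>i. Suc i < N \<longrightarrow> pv x2 (Suc i) = pv y i"
      using e1 e2 edgeN by blast+
    have lo: "pv x1 (Suc i) = pv x2 (Suc i)" if "Suc i < N" for i using x1 x2 that by metis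
    show "x1 = x2"
    proof (rule eq_bits[of x1 N x2])
      show "x1 < 2^N" "x2 < 2^N" using x1S x2S unfolding S_def by auto
      fix i assume i: "i < N"
      show "pv x1 i = pv x2 i"
      proof (cases i)
        case (Suc i') then show ?thesis using lo i by blast
      next
        case 0
        have s: "(\<Sum>j<k'. pv x1 (Suc j)) = (\<Sum>j<k'. pv x2 (Suc j))"
          by (rule sum.cong[OF refl]) (use lo n1 N' in auto)
        have sh: "(\<Sum>j<k. pv x (0+j)) = pv x 0 + (\<Sum>j<k'. pv x (Suc j))" for x
          unfolding k' by (subst sum.lessThan_Suc_shift) simp
        have "pv (h x1) 0 = pv (h x2) 0" using hh by simp
        then have "(pv x1 0 + (\<Sum>j<k'. pv x1 (Suc j))) mod 2 = (pv x2 0 + (\<Sum>j<k'. pv x2 (Suc j))) mod 2"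
          using hb(2)[of 0 x1] hb(2)[of 0 x2] n1 sh[of x1] sh[of x2] by simp
        then have "pv x1 0 = pv x2 0" using s par1' pv_lt by metis
        then show ?thesis using 0 by simp
      qed
    qed
  qed
  have fin: "finite S" unfolding S_def by simp
  have "disjoint_union_of_cycles E S" by (rule cycles_lemma[OF fin ex us up])
  then show ?thesis unfolding E_def S_def h_def N_def .
qed

end
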